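(* Consider the weighted stochastic block model: there are $r$ latent communities labelled $1,\ldots,r$; each node $i$ is independently assigned a latent community $Z_i$ with $\mathbb{P}(Z_i=z)=p_z>0$ for $z=1,\ldots,r$ (so $\boldsymbol{p}=(p_1,\ldots,p_r)'$ sums to one); each unordered pair of distinct nodes $i\neq j$ carries a real-valued edge weight $X_{i,j}=X_{j,i}$, where, conditional on the community indicators, the edge weights are independent and $X_{i,j}$ has distribution function $F_{z_1,z_2}(x)=\mathbb{P}(X_{i,j}\le x\mid Z_i=z_1,Z_j=z_2)$. Let $F_z(x):=\mathbb{P}(X_{i,j}\le x\mid Z_i=z)=\sum_{z'=1}^r F_{z,z'}(x)\,p_{z'}$. Suppose that the functions $F_1,\ldots,F_r$ are linearly independent. Then: (i) The number of communities $r$ is nonparametrically recoverable (uniquely determined) from the joint distribution of the edge weights $(X_{1,2},X_{1,3})$ of a two-star subgraph on three distinct nodes $1,2,3$ (edges $\{1,2\},\{1,3\}$). (ii) The community distribution $\boldsymbol{p}$, as well as, for a given function $\varphi$, the conditional expectations $$\varphi_{z_1,z_2}:=\mathbb{E}(\varphi(X_{i,j})\mid Z_i=z_1,Z_j=z_2),\qquad 1\le z_1,z_2\le r,$$ are nonparametrically recoverable (uniquely determined up to a common relabeling of the latent communities) from the joint distribution of the edge weights $(X_{1,2},X_{1,3},X_{1,4})$ of a three-star subgraph on four distinct nodes and the joint distribution of the edge weights $(X_{1,2},X_{1,3},X_{3,4})$ of a path subgraph on four distinct nodes $1,2,3,4$.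
   Context: "Nonparametrically recoverable" means that the quantity is uniquely determined by the indicated distribution of observed edge weights, without any parametric restrictions on the distributions $F_{z_1,z_2}$, among all weighted stochastic block models satisfying the stated assumptions; "up to relabeling" means up to a single permutation of the community labels $1,\ldots,r$ applied simultaneously to all components. *)

theory Defs
  imports "HOL-Probability.Probability"
begin

text \<open>Weighted stochastic block model with r communities labelled 1..r.
  p z = P(Z_i = z); F z1 z2 = conditional law of X_{i,j} given Z_i = z1, Z_j = z2
  (a Borel probability measure on the reals; its distribution function is
  x |-> measure (F z1 z2) {..x}).\<close>

definition wsbm_cdf :: "(nat \<Rightarrow> nat \<Rightarrow> real measure) \<Rightarrow> nat \<Rightarrow> nat \<Rightarrow> real \<Rightarrow> real" where
  "wsbm_cdf F z1 z2 x = measure (F z1 z2) {..x}"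

definition wsbm_marg_cdf ::
  "nat \<Rightarrow> (nat \<Rightarrow> real) \<Rightarrow> (nat \<Rightarrow> nat \<Rightarrow> real measure) \<Rightarrow> nat \<Rightarrow> real \<Rightarrow> real" where
  "wsbm_marg_cdf r p F z x = (\<Sum>z'\<in>{1..r}. wsbm_cdf F z z' x * p z')"

definition wsbm :: "nat \<Rightarrow> (nat \<Rightarrow> real) \<Rightarrow> (nat \<Rightarrow> nat \<Rightarrow> real measure) \<Rightarrow> bool" where
  "wsbm r p F \<longleftrightarrow>
     (\<forall>z\<in>{1..r}. p z > 0) \<and> (\<Sum>z\<in>{1..r}. p z) = 1 \<and>
     (\<forall>z1\<in>{1..r}. \<forall>z2\<in>{1..r}.
        prob_space (F z1 z2) \<and> sets (F z1 z2) = sets borel \<and> F z1 z2 = F z2 z1) \<and>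
     (\<forall>c :: nat \<Rightarrow> real.
        (\<forall>x. (\<Sum>z\<in>{1..r}. c z * wsbm_marg_cdf r p F z x) = 0) \<longrightarrow> (\<forall>z\<in>{1..r}. c z = 0))"

text \<open>Joint distribution function of the edge weights (X_{e_1},...,X_{e_m}) of a
  subgraph with nodes 1..n and distinct edges E = [e_1,...,e_m]:
  P(X_{e_1} <= x_1, ..., X_{e_m} <= x_m), obtained by averaging over the i.i.d.
  community labels of the nodes and using conditional independence of the edge weights.\<close>
definition wsbm_joint_cdf ::
  "nat \<Rightarrow> (nat \<Rightarrow> real) \<Rightarrow> (nat \<Rightarrow> nat \<Rightarrow> real measure) \<Rightarrow> nat \<Rightarrow> (nat \<times> nat) list
    \<Rightarrow> real list \<Rightarrow> real" where
  "wsbm_joint_cdf r p F n E xs =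
     (\<Sum>z \<in> {1..n} \<rightarrow>\<^sub>E {1..r}.
        (\<Prod>v\<in>{1..n}. p (z v)) *
        (\<Prod>k<length E. wsbm_cdf F (z (fst (E ! k))) (z (snd (E ! k))) (xs ! k)))"

definition two_star :: "(nat \<times> nat) list" where "two_star = [(1,2),(1,3)]"
definition three_star :: "(nat \<times> nat) list" where "three_star = [(1,2),(1,3),(1,4)]"
definition path4 :: "(nat \<times> nat) list" where "path4 = [(1,2),(1,3),(3,4)]"

end

theory Submission
  imports Defs
begin


definition lin_indep :: "nat set \<Rightarrow> (nat \<Rightarrow> real \<Rightarrow> real) \<Rightarrow> bool" where
  "lin_indep I f \<longleftrightarrow> (\<forall>c. (\<forall>x. (\<Sum>z\<in>I. c z * f z x) = 0) \<longrightarrow> (\<forall>z\<in>I. c z = 0))"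

definition ptf :: "((real \<Rightarrow> real) \<Rightarrow> real) \<Rightarrow> bool" where
  "ptf L \<longleftrightarrow> (\<exists>X c. finite X \<and> (\<forall>h. L h = (\<Sum>x\<in>X. c x * h x)))"

lemma indep_coeff:
  assumes "lin_indep I f" "\<And>t. (\<Sum>c\<in>I. a c * f c t) = (\<Sum>c\<in>I. b c * f c t)" "c \<in> I"
  shows "a c = b c"
proof -
  have "\<forall>x. (\<Sum>z\<in>I. (a z - b z) * f z x) = 0"
    using assms(2) by (simp add: left_diff_distrib sum_subtractf)
  then show ?thesis using assms(1,3) unfolding lin_indep_def by fastforce
qed

lemma lin_indep_subset:
  assumes "lin_indep I f" "S \<subseteq> I" "finite I"
  shows "lin_indep S f"
  unfolding lin_indep_def
proof (intro allI impI ballI)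
  fix c z assume h: "\<forall>x. (\<Sum>z\<in>S. c z * f z x) = 0" and z: "z \<in> S"
  have "\<forall>x. (\<Sum>z\<in>I. (if z \<in> S then c z else 0) * f z x) = 0"
  proof
    fix x
    have "(\<Sum>z\<in>I. (if z \<in> S then c z else 0) * f z x) = (\<Sum>z\<in>I. (if z \<in> S then c z * f z x else 0))"
      by (rule sum.cong) auto
    also have "\<dots> = (\<Sum>z\<in>I \<inter> S. c z * f z x)" using assms(3) by (rule sum.inter_restrict[symmetric])
    also have "I \<inter> S = S" using assms(2) by auto
    finally show "(\<Sum>z\<in>I. (if z \<in> S then c z else 0) * f z x) = 0" using h by simp
  qed
  moreover have "(\<forall>x. (\<Sum>z\<in>I. (if z \<in> S then c z else 0) * f z x) = 0) \<longrightarrow> (\<forall>z\<in>I. (if z \<in> S then c z else 0) = 0)"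
    using assms(1) unfolding lin_indep_def by (rule spec)
  ultimately have "(if z \<in> S then c z else 0) = 0" using assms(2) z by blast
  then show "c z = 0" using z by simp
qed

lemma lin_indep_nonzero:
  assumes "lin_indep I f" "finite I" "c \<in> I"
  shows "\<exists>x. f c x \<noteq> 0"
proof (rule ccontr)
  assume nz: "\<not> ?thesis"
  have "\<forall>x. (\<Sum>z\<in>I. (if z = c then 1 else 0) * f z x) = 0"
  proof
    fix x
    have "(\<Sum>z\<in>I. (if z = c then 1 else 0) * f z x) = (\<Sum>z\<in>I. (if z = c then f z x else 0))"
      by (rule sum.cong) auto
    then show "(\<Sum>z\<in>I. (if z = c then 1 else 0) * f z x) = 0" using assms nz by simp
  qed
  then show False using assms unfolding lin_indep_def by fastforce
qed

lemma ptf_cong: "ptf L \<Longrightarrow> (\<And>h. L h = L' h) \<Longrightarrow> ptf L'"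
  unfolding ptf_def by metis

lemma ptf_eval: "ptf (\<lambda>h. h x0)"
  unfolding ptf_def by (rule exI[of _ "{x0}"], rule exI[of _ "\<lambda>_. 1"]) simp

lemma ptf_zero: "ptf (\<lambda>h. 0)"
  unfolding ptf_def by (rule exI[of _ "{}"]) simp

lemma ptf_comb:
  assumes "ptf L1" "ptf L2"
  shows "ptf (\<lambda>h. a * L1 h + b * L2 h)"
proof -
  obtain X1 c1 where 1: "finite X1" "\<And>h. L1 h = (\<Sum>x\<in>X1. c1 x * h x)" using assms(1) unfolding ptf_def by blast
  obtain X2 c2 where 2: "finite X2" "\<And>h. L2 h = (\<Sum>x\<in>X2. c2 x * h x)" using assms(2) unfolding ptf_def by blast
  define c where "c x = a * (if x \<in> X1 then c1 x else 0) + b * (if x \<in> X2 then c2 x else 0)" for x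
  have "a * L1 h + b * L2 h = (\<Sum>x\<in>X1 \<union> X2. c x * h x)" for h
  proof -
    have e1: "(\<Sum>x\<in>X1 \<union> X2. (if x \<in> X1 then c1 x * h x else 0)) = L1 h"
    proof -
      have "(\<Sum>x\<in>X1 \<union> X2. (if x \<in> X1 then c1 x * h x else 0)) = (\<Sum>x\<in>(X1 \<union> X2) \<inter> X1. c1 x * h x)"
        using 1 2 by (intro sum.inter_restrict[symmetric]) auto
      also have "(X1 \<union> X2) \<inter> X1 = X1" by auto
      finally show ?thesis using 1 by simp
    qed
    have e2: "(\<Sum>x\<in>X1 \<union> X2. (if x \<in> X2 then c2 x * h x else 0)) = L2 h"
    proof -
      have "(\<Sum>x\<in>X1 \<union> X2. (if x \<in> X2 then c2 x * h x else 0)) = (\<Sum>x\<in>(X1 \<union> X2) \<inter> X2. c2 x * h x)"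
        using 1 2 by (intro sum.inter_restrict[symmetric]) auto
      also have "(X1 \<union> X2) \<inter> X2 = X2" by auto
      finally show ?thesis using 2 by simp
    qed
    have "(\<Sum>x\<in>X1 \<union> X2. c x * h x) = (\<Sum>x\<in>X1 \<union> X2. a * (if x \<in> X1 then c1 x * h x else 0) + b * (if x \<in> X2 then c2 x * h x else 0))"
      unfolding c_def by (rule sum.cong) (auto simp: algebra_simps)
    also have "\<dots> = a * L1 h + b * L2 h"
      by (simp add: sum.distrib sum_distrib_left[symmetric] e1 e2)
    finally show ?thesis by simp
  qed
  then have "\<forall>h. a * L1 h + b * L2 h = (\<Sum>x\<in>X1 \<union> X2. c x * h x)" by blast
  moreover have "finite (X1 \<union> X2)" using 1 2 by simp
  ultimately show ?thesis unfolding ptf_def by blast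
qed

lemma ptf_sum:
  assumes "finite I" "\<forall>z\<in>I. ptf (L z)"
  shows "ptf (\<lambda>h. \<Sum>z\<in>I. a z * L z h)"
  using assms
proof (induction I rule: finite_induct)
  case empty then show ?case by (simp add: ptf_zero)
next
  case (insert s S)
  have "ptf (\<lambda>h. a s * L s h + 1 * (\<Sum>z\<in>S. a z * L z h))"
    using insert by (intro ptf_comb) auto
  then show ?case using insert by simp
qed

lemma ptf_lin:
  assumes "ptf L" "finite I"
  shows "L (\<lambda>x. \<Sum>z\<in>I. a z * h z x) = (\<Sum>z\<in>I. a z * L (h z))"
proof -
  obtain X c where 1: "finite X" "\<And>h. L h = (\<Sum>x\<in>X. c x * h x)" using assms(1) unfolding ptf_def by blast
  have "(\<Sum>x\<in>X. c x * (\<Sum>z\<in>I. a z * h z x)) = (\<Sum>z\<in>I. a z * (\<Sum>x\<in>X. c x * h z x))"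
    by (simp add: sum_distrib_left mult.left_commute) (rule sum.swap)
  then show ?thesis using 1 by simp
qed

lemma ptf_scal:
  assumes "ptf L"
  shows "L (\<lambda>x. a * h x) = a * L h"
  using ptf_lin[OF assms, of "{0}" "\<lambda>_. a" "\<lambda>_. h"] by simp


lemma dual_exists:
  assumes "finite I" "lin_indep I f"
  shows "\<exists>ll. (\<forall>z\<in>I. ptf (ll z)) \<and> (\<forall>z\<in>I. \<forall>z'\<in>I. ll z (f z') = (if z = z' then 1 else 0))"
  using assms
proof (induction I rule: finite_induct)
  case empty then show ?case by simp
next
  case (insert s S)
  have "lin_indep S f" using insert.hyps by (intro lin_indep_subset[OF insert.prems]) auto
  then obtain ll where l1: "\<forall>z\<in>S. ptf (ll z)" and l2: "\<forall>z\<in>S. \<forall>z'\<in>S. ll z (f z') = (if z = z' then 1 else 0)"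
    using insert.IH by blast
  define h0 where "h0 x = f s x - (\<Sum>z\<in>S. ll z (f s) * f z x)" for x
  have "\<exists>x. h0 x \<noteq> 0"
  proof (rule ccontr)
    assume "\<not> ?thesis"
    then have h0z: "\<forall>x. h0 x = 0" by blast
    have "\<forall>x. (\<Sum>z\<in>insert s S. (if z = s then 1 else - ll z (f s)) * f z x) = 0"
    proof
      fix x
      have "(\<Sum>z\<in>insert s S. (if z = s then 1 else - ll z (f s)) * f z x)
          = f s x + (\<Sum>z\<in>S. (if z = s then 1 else - ll z (f s)) * f z x)"
        using insert.hyps by (simp add: sum.insert)
      also have "(\<Sum>z\<in>S. (if z = s then 1 else - ll z (f s)) * f z x) = (\<Sum>z\<in>S. - (ll z (f s) * f z x))"
        using insert.hyps by (intro sum.cong) auto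
      also have "\<dots> = - (\<Sum>z\<in>S. ll z (f s) * f z x)" by (rule sum_negf)
      finally show "(\<Sum>z\<in>insert s S. (if z = s then 1 else - ll z (f s)) * f z x) = 0"
        using h0z unfolding h0_def by simp
    qed
    moreover have "(\<forall>x. (\<Sum>z\<in>insert s S. (if z = s then 1 else - ll z (f s)) * f z x) = 0) \<longrightarrow> (\<forall>z\<in>insert s S. (if z = s then 1 else - ll z (f s)) = (0::real))"
      using insert.prems unfolding lin_indep_def by (rule spec)
    ultimately have "(if s = s then 1 else - ll s (f s)) = (0::real)" by simp
    then show False by simp
  qed
  then obtain xs where xs: "h0 xs \<noteq> 0" by blast
  define ls where "ls h = (h xs - (\<Sum>z\<in>S. f z xs * ll z h)) / h0 xs" for h
  define ll' where "ll' z = (if z = s then ls else (\<lambda>h. ll z h - ll z (f s) * ls h))" for z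
  have pls: "ptf ls"
  proof -
    have "ptf (\<lambda>h. (1 / h0 xs) * h xs + (- 1 / h0 xs) * (\<Sum>z\<in>S. f z xs * ll z h))"
      by (rule ptf_comb[OF ptf_eval ptf_sum[OF insert.hyps(1) l1]])
    then show ?thesis
      by (rule ptf_cong) (simp add: ls_def diff_divide_distrib)
  qed
  have ls_S: "ls (f z') = 0" if "z' \<in> S" for z'
  proof -
    have "(\<Sum>z\<in>S. f z xs * ll z (f z')) = (\<Sum>z\<in>S. (if z = z' then f z xs else 0))"
      using l2 that by (intro sum.cong) auto
    then show ?thesis using that insert.hyps by (simp add: ls_def)
  qed
  have ls_s: "ls (f s) = 1"
  proof -
    have "(\<Sum>z\<in>S. f z xs * ll z (f s)) = (\<Sum>z\<in>S. ll z (f s) * f z xs)" by (simp add: mult.commute)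
    then have "f s xs - (\<Sum>z\<in>S. f z xs * ll z (f s)) = h0 xs" unfolding h0_def by simp
    then show ?thesis using xs unfolding ls_def by simp
  qed
  have "\<forall>z\<in>insert s S. ptf (ll' z)"
  proof
    fix z assume "z \<in> insert s S"
    show "ptf (ll' z)"
    proof (cases "z = s")
      case True then show ?thesis using pls by (simp add: ll'_def)
    next
      case False
      then have "z \<in> S" using \<open>z \<in> insert s S\<close> by simp
      have "ptf (\<lambda>h. 1 * ll z h + (- ll z (f s)) * ls h)"
        using l1 \<open>z \<in> S\<close> pls by (intro ptf_comb[of "ll z" ls]) auto
      then show ?thesis by (rule ptf_cong) (simp add: ll'_def False)
    qed
  qed
  moreover have "\<forall>z\<in>insert s S. \<forall>z'\<in>insert s S. ll' z (f z') = (if z = z' then 1 else 0)"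
  proof (intro ballI)
    fix z z' assume z: "z \<in> insert s S" and z': "z' \<in> insert s S"
    show "ll' z (f z') = (if z = z' then 1 else 0)"
    proof (cases "z = s")
      case True
      then show ?thesis using z' ls_S ls_s unfolding ll'_def by auto
    next
      case False
      then have zS: "z \<in> S" using z by simp
      show ?thesis
      proof (cases "z' = s")
        case True
        then show ?thesis using False ls_s unfolding ll'_def by simp
      next
        case False2: False
        then have "z' \<in> S" using z' by simp
        then show ?thesis using False False2 zS l2 ls_S unfolding ll'_def by simp
      qed
    qed
  qed
  ultimately show ?case by (intro exI[of _ ll'] conjI)
qed



lemma dual_sum:
  fixes a :: "nat \<Rightarrow> real" and ll :: "nat \<Rightarrow> (real \<Rightarrow> real) \<Rightarrow> real"
  assumes "finite I" "\<forall>z\<in>I. \<forall>z'\<in>I. ll z (f z') = (if z = z' then 1 else 0)" "c \<in> I"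
  shows "(\<Sum>z\<in>I. a z * ll c (f z)) = a c"
proof -
  have "(\<Sum>z\<in>I. a z * ll c (f z)) = (\<Sum>z\<in>I. (if c = z then a z else 0))"
    using assms by (intro sum.cong) auto
  then show ?thesis using assms by simp
qed

lemma span2:
  assumes fin: "finite I" "finite J" and ind: "lin_indep I f" and pos: "\<forall>z\<in>I. p z > 0"
    and eq: "\<And>x y. (\<Sum>z\<in>I. p z * f z x * f z y) = (\<Sum>w\<in>J. q w * g w x * g w y)"
  shows "\<exists>N. \<forall>c\<in>I. \<forall>y. f c y = (\<Sum>w\<in>J. N c w * g w y)"
proof -
  obtain ll where l1: "\<forall>z\<in>I. ptf (ll z)" and l2: "\<forall>z\<in>I. \<forall>z'\<in>I. ll z (f z') = (if z = z' then 1 else 0)"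
    using dual_exists[OF fin(1) ind] by blast
  have "f c y = (\<Sum>w\<in>J. (q w * ll c (g w) / p c) * g w y)" if c: "c \<in> I" for c y
  proof -
    have "ll c (\<lambda>x. \<Sum>z\<in>I. (p z * f z y) * f z x) = (\<Sum>z\<in>I. (p z * f z y) * ll c (f z))"
      using l1 c fin by (intro ptf_lin) auto
    also have "\<dots> = p c * f c y" using dual_sum[OF fin(1) l2 c] .
    finally have 1: "ll c (\<lambda>x. \<Sum>z\<in>I. (p z * f z y) * f z x) = p c * f c y" .
    have "ll c (\<lambda>x. \<Sum>w\<in>J. (q w * g w y) * g w x) = (\<Sum>w\<in>J. (q w * g w y) * ll c (g w))"
      using l1 c fin by (intro ptf_lin) auto
    moreover have "(\<lambda>x. \<Sum>z\<in>I. (p z * f z y) * f z x) = (\<lambda>x. \<Sum>w\<in>J. (q w * g w y) * g w x)"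
      using eq by (simp add: mult.commute mult.left_commute)
    ultimately have "p c * f c y = (\<Sum>w\<in>J. (q w * g w y) * ll c (g w))" using 1 by simp
    moreover have "p c \<noteq> 0" using pos c by auto
    ultimately have "f c y = (\<Sum>w\<in>J. (q w * g w y) * ll c (g w)) / p c"
      by (metis nonzero_mult_div_cancel_left)
    also have "\<dots> = (\<Sum>w\<in>J. (q w * ll c (g w) / p c) * g w y)"
      by (simp add: sum_divide_distrib mult_ac)
    finally show ?thesis .
  qed
  then show ?thesis by (intro exI[of _ "\<lambda>c w. q w * ll c (g w) / p c"]) blast
qed

lemma span3:
  assumes fin: "finite I" "finite J" and ind: "lin_indep I f" and pos: "\<forall>z\<in>I. p z > 0"
    and eq: "\<And>x y t. (\<Sum>z\<in>I. p z * f z x * f z y * f z t) = (\<Sum>w\<in>J. q w * g w x * g w y * g w t)"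
  shows "\<exists>N. \<forall>c\<in>I. \<forall>y. f c y = (\<Sum>w\<in>J. N c w * g w y)"
proof -
  obtain ll where l1: "\<forall>z\<in>I. ptf (ll z)" and l2: "\<forall>z\<in>I. \<forall>z'\<in>I. ll z (f z') = (if z = z' then 1 else 0)"
    using dual_exists[OF fin(1) ind] by blast
  define M where "M w = (\<Sum>z'\<in>I. ll z' (g w))" for w
  have "f c t = (\<Sum>w\<in>J. (q w * ll c (g w) * M w / p c) * g w t)" if c: "c \<in> I" for c t
  proof -
    have A: "ll c (\<lambda>x. \<Sum>z\<in>I. (p z * f z y * f z t) * f z x) = p c * f c y * f c t" for y
    proof -
      have "ll c (\<lambda>x. \<Sum>z\<in>I. (p z * f z y * f z t) * f z x) = (\<Sum>z\<in>I. (p z * f z y * f z t) * ll c (f z))"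
        using l1 c fin by (intro ptf_lin) auto
      also have "\<dots> = p c * f c y * f c t" using dual_sum[OF fin(1) l2 c] .
      finally show ?thesis .
    qed
    have B: "ll c (\<lambda>x. \<Sum>w\<in>J. (q w * g w y * g w t) * g w x) = (\<Sum>w\<in>J. (q w * g w t * ll c (g w)) * g w y)" for y
    proof -
      have "ll c (\<lambda>x. \<Sum>w\<in>J. (q w * g w y * g w t) * g w x) = (\<Sum>w\<in>J. (q w * g w y * g w t) * ll c (g w))"
        using l1 c fin by (intro ptf_lin) auto
      then show ?thesis by (simp add: mult_ac)
    qed
    have C: "(\<lambda>x. \<Sum>z\<in>I. (p z * f z y * f z t) * f z x) = (\<lambda>x. \<Sum>w\<in>J. (q w * g w y * g w t) * g w x)" for y
      using eq by (simp add: mult.commute mult.left_commute)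
    have D: "p c * f c y * f c t = (\<Sum>w\<in>J. (q w * g w t * ll c (g w)) * g w y)" for y
      using A B C by metis
    have "(\<Sum>z'\<in>I. ll z' (\<lambda>y. (p c * f c t) * f c y)) = (\<Sum>z'\<in>I. (p c * f c t) * ll z' (f c))"
      using l1 by (intro sum.cong) (auto simp: ptf_scal)
    also have "\<dots> = p c * f c t"
    proof -
      have "(\<Sum>z'\<in>I. (p c * f c t) * ll z' (f c)) = (\<Sum>z'\<in>I. (if z' = c then p c * f c t else 0))"
        using l2 c by (intro sum.cong) auto
      then show ?thesis using c fin by simp
    qed
    finally have E: "(\<Sum>z'\<in>I. ll z' (\<lambda>y. (p c * f c t) * f c y)) = p c * f c t" .
    have "(\<Sum>z'\<in>I. ll z' (\<lambda>y. \<Sum>w\<in>J. (q w * g w t * ll c (g w)) * g w y))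
        = (\<Sum>z'\<in>I. \<Sum>w\<in>J. (q w * g w t * ll c (g w)) * ll z' (g w))"
      using l1 fin by (intro sum.cong ptf_lin) auto
    also have "\<dots> = (\<Sum>w\<in>J. \<Sum>z'\<in>I. (q w * g w t * ll c (g w)) * ll z' (g w))"
      by (rule sum.swap)
    also have "\<dots> = (\<Sum>w\<in>J. (q w * ll c (g w) * M w) * g w t)"
      unfolding M_def by (simp add: sum_distrib_left mult_ac)
    finally have G: "(\<Sum>z'\<in>I. ll z' (\<lambda>y. \<Sum>w\<in>J. (q w * g w t * ll c (g w)) * g w y)) = (\<Sum>w\<in>J. (q w * ll c (g w) * M w) * g w t)" .
    have H: "(\<lambda>y. (p c * f c t) * f c y) = (\<lambda>y. \<Sum>w\<in>J. (q w * g w t * ll c (g w)) * g w y)"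
      using D by (simp add: mult_ac)
    have "p c * f c t = (\<Sum>w\<in>J. (q w * ll c (g w) * M w) * g w t)"
      using E G H by metis
    moreover have "p c \<noteq> 0" using pos c by auto
    ultimately have "f c t = (\<Sum>w\<in>J. (q w * ll c (g w) * M w) * g w t) / p c"
      by (metis nonzero_mult_div_cancel_left)
    also have "\<dots> = (\<Sum>w\<in>J. (q w * ll c (g w) * M w / p c) * g w t)"
      by (simp add: sum_divide_distrib mult_ac)
    finally show ?thesis .
  qed
  then show ?thesis by (intro exI[of _ "\<lambda>c w. q w * ll c (g w) * M w / p c"]) blast
qed

lemma compose_coeff:
  assumes fin: "finite I" "finite J" and ind: "lin_indep I f"
    and N: "\<forall>c\<in>I. \<forall>y. f c y = (\<Sum>w\<in>J. N c w * g w y)"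
    and M: "\<forall>w\<in>J. \<forall>y. g w y = (\<Sum>c\<in>I. M w c * f c y)"
    and c: "c \<in> I" and c': "c' \<in> I"
  shows "(\<Sum>w\<in>J. N c w * M w c') = (if c = c' then 1 else 0)"
proof -
  have "(\<Sum>c'\<in>I. (\<Sum>w\<in>J. N c w * M w c') * f c' t) = (\<Sum>c'\<in>I. (if c = c' then 1 else 0) * f c' t)" for t
  proof -
    have "(\<Sum>c'\<in>I. (\<Sum>w\<in>J. N c w * M w c') * f c' t) = (\<Sum>c'\<in>I. \<Sum>w\<in>J. N c w * (M w c' * f c' t))"
      by (simp add: sum_distrib_left sum_distrib_right mult_ac)
    also have "\<dots> = (\<Sum>w\<in>J. \<Sum>c'\<in>I. N c w * (M w c' * f c' t))" by (rule sum.swap)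
    also have "\<dots> = (\<Sum>w\<in>J. N c w * g w t)" using M by (simp add: sum_distrib_left)
    also have "\<dots> = f c t" using N c by simp
    also have "\<dots> = (\<Sum>c'\<in>I. (if c' = c then f c' t else 0))" using c fin by simp
    also have "\<dots> = (\<Sum>c'\<in>I. (if c = c' then 1 else 0) * f c' t)" by (rule sum.cong) auto
    finally show ?thesis .
  qed
  from indep_coeff[OF ind this c'] show ?thesis .
qed

lemma trace_card:
  assumes fin: "finite I" "finite J" and indf: "lin_indep I f" and indg: "lin_indep J g"
    and N: "\<forall>c\<in>I. \<forall>y. f c y = (\<Sum>w\<in>J. N c w * g w y)"
    and M: "\<forall>w\<in>J. \<forall>y. g w y = (\<Sum>c\<in>I. M w c * f c y)"
  shows "card I = card J"
proof -
  have 1: "(\<Sum>w\<in>J. N c w * M w c) = 1" if "c \<in> I" for c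
    using compose_coeff[OF fin indf N M that that] by simp
  have 2: "(\<Sum>c\<in>I. M w c * N c w) = 1" if "w \<in> J" for w
    using compose_coeff[OF fin(2,1) indg M N that that] by simp
  have "real (card I) = (\<Sum>c\<in>I. \<Sum>w\<in>J. N c w * M w c)" using 1 by simp
  also have "\<dots> = (\<Sum>w\<in>J. \<Sum>c\<in>I. M w c * N c w)" by (subst sum.swap) (simp add: mult.commute)
  also have "\<dots> = real (card J)" using 2 by simp
  finally show ?thesis by simp
qed



lemma sum_single:
  fixes a :: "nat \<Rightarrow> real"
  assumes "finite J" "w \<in> J"
  shows "(\<Sum>w'\<in>J. a w' * (if w = w' then 1 else 0)) = a w"
proof -
  have "(\<Sum>w'\<in>J. a w' * (if w = w' then 1 else 0)) = (\<Sum>w'\<in>J. (if w = w' then a w' else 0))"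
    by (rule sum.cong) auto
  then show ?thesis using assms by simp
qed

lemma components:
  assumes fin: "finite I" "finite J" and indf: "lin_indep I f" and indg: "lin_indep J g"
    and posp: "\<forall>z\<in>I. p z > 0" and posq: "\<forall>w\<in>J. q w > 0"
    and eq: "\<And>x y t. (\<Sum>z\<in>I. p z * f z x * f z y * f z t) = (\<Sum>w\<in>J. q w * g w x * g w y * g w t)"
    and N: "\<forall>c\<in>I. \<forall>y. f c y = (\<Sum>w\<in>J. N c w * g w y)"
    and M: "\<forall>w\<in>J. \<forall>y. g w y = (\<Sum>c\<in>I. M w c * f c y)"
    and card: "card I = card J"
    and limf: "\<forall>c\<in>I. (f c \<longlongrightarrow> 1) at_top" and limg: "\<forall>w\<in>J. (g w \<longlongrightarrow> 1) at_top"
  shows "\<exists>\<sigma>. bij_betw \<sigma> I J \<and> (\<forall>c\<in>I. f c = g (\<sigma> c)) \<and> (\<forall>c\<in>I. q (\<sigma> c) = p c)"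
proof -
  have A: "p c * f c x * f c y = (\<Sum>w\<in>J. q w * M w c * g w x * g w y)" if c: "c \<in> I" for c x y
  proof -
    have "(\<Sum>c\<in>I. (p c * f c x * f c y) * f c t) = (\<Sum>c\<in>I. (\<Sum>w\<in>J. q w * M w c * g w x * g w y) * f c t)" for t
    proof -
      have "(\<Sum>c\<in>I. (p c * f c x * f c y) * f c t) = (\<Sum>w\<in>J. q w * g w x * g w y * g w t)"
        using eq[of x y t] by (simp add: mult_ac)
      also have "\<dots> = (\<Sum>w\<in>J. \<Sum>c\<in>I. (q w * g w x * g w y) * (M w c * f c t))"
        using M by (simp add: sum_distrib_left)
      also have "\<dots> = (\<Sum>c\<in>I. \<Sum>w\<in>J. (q w * g w x * g w y) * (M w c * f c t))" by (rule sum.swap)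
      also have "\<dots> = (\<Sum>c\<in>I. (\<Sum>w\<in>J. q w * M w c * g w x * g w y) * f c t)"
        by (simp add: sum_distrib_left sum_distrib_right mult_ac)
      finally show ?thesis .
    qed
    from indep_coeff[OF indf this c] show ?thesis .
  qed
  have B: "p c * f c x * N c w = q w * M w c * g w x" if c: "c \<in> I" and w: "w \<in> J" for c x w
  proof -
    have "(\<Sum>w\<in>J. (p c * f c x * N c w) * g w y) = (\<Sum>w\<in>J. (q w * M w c * g w x) * g w y)" for y
    proof -
      have "(\<Sum>w\<in>J. (p c * f c x * N c w) * g w y) = (p c * f c x) * (\<Sum>w\<in>J. N c w * g w y)"
        by (simp add: sum_distrib_left mult.assoc)
      also have "\<dots> = p c * f c x * f c y" by (simp only: N[rule_format, OF c, symmetric])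
      finally have "(\<Sum>w\<in>J. (p c * f c x * N c w) * g w y) = p c * f c x * f c y" .
      also have "\<dots> = (\<Sum>w\<in>J. (q w * M w c * g w x) * g w y)" using A[OF c] by (simp add: mult_ac)
      finally show ?thesis .
    qed
    from indep_coeff[OF indg this w] show ?thesis .
  qed
  have C: "p c * N c w * N c w' = q w * M w c * (if w = w' then 1 else 0)"
    if c: "c \<in> I" and w: "w \<in> J" and w': "w' \<in> J" for c w w'
  proof -
    have "(\<Sum>w'\<in>J. (p c * N c w * N c w') * g w' x) = (\<Sum>w'\<in>J. (q w * M w c * (if w = w' then 1 else 0)) * g w' x)" for x
    proof -
      have "(\<Sum>w'\<in>J. (p c * N c w * N c w') * g w' x) = (p c * N c w) * (\<Sum>w'\<in>J. N c w' * g w' x)"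
        by (simp add: sum_distrib_left mult.assoc)
      also have "\<dots> = (p c * N c w) * f c x" by (simp only: N[rule_format, OF c, symmetric])
      finally have "(\<Sum>w'\<in>J. (p c * N c w * N c w') * g w' x) = p c * f c x * N c w" by (simp add: mult_ac)
      also have "\<dots> = q w * M w c * g w x" using B[OF c w] .
      also have "\<dots> = (\<Sum>w'\<in>J. (q w * M w c * g w' x) * (if w = w' then 1 else 0))"
        using sum_single[OF fin(2) w, of "\<lambda>w'. q w * M w c * g w' x"] by simp
      also have "\<dots> = (\<Sum>w'\<in>J. (q w * M w c * (if w = w' then 1 else 0)) * g w' x)"
        by (simp add: mult_ac)
      finally show ?thesis .
    qed
    from indep_coeff[OF indg this w'] show ?thesis .
  qed
  have ex: "\<exists>w\<in>J. N c w \<noteq> 0" if c: "c \<in> I" for c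
  proof (rule ccontr)
    assume "\<not> ?thesis"
    then have "\<forall>x. f c x = 0" using N c by simp
    then show False using lin_indep_nonzero[OF indf fin(1) c] by simp
  qed
  define \<sigma> where "\<sigma> c = (SOME w. w \<in> J \<and> N c w \<noteq> 0)" for c
  have s1: "\<sigma> c \<in> J \<and> N c (\<sigma> c) \<noteq> 0" if "c \<in> I" for c
    unfolding \<sigma>_def using ex[OF that] by (metis (mono_tags, lifting) someI)
  have s0: "N c w = 0" if c: "c \<in> I" and w: "w \<in> J" "w \<noteq> \<sigma> c" for c w
  proof -
    have "p c * N c (\<sigma> c) * N c w = 0" using C[OF c _ w(1), of "\<sigma> c"] s1[OF c] w by simp
    moreover have "p c \<noteq> 0" using posp c by auto
    ultimately show ?thesis using s1[OF c] by simp
  qed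
  have fscale: "f c x = N c (\<sigma> c) * g (\<sigma> c) x" if c: "c \<in> I" for c x
  proof -
    have "f c x = (\<Sum>w\<in>J. N c w * g w x)" using N c by simp
    also have "\<dots> = (\<Sum>w\<in>J. (if w = \<sigma> c then N c (\<sigma> c) * g (\<sigma> c) x else 0))"
      using s0[OF c] by (intro sum.cong) auto
    also have "\<dots> = N c (\<sigma> c) * g (\<sigma> c) x" using s1[OF c] fin by simp
    finally show ?thesis .
  qed
  have lam1: "N c (\<sigma> c) = 1" if c: "c \<in> I" for c
  proof -
    have "((\<lambda>x. N c (\<sigma> c) * g (\<sigma> c) x) \<longlongrightarrow> N c (\<sigma> c) * 1) at_top"
      using limg s1[OF c] by (intro tendsto_mult tendsto_const) auto
    moreover have "((\<lambda>x. N c (\<sigma> c) * g (\<sigma> c) x) \<longlongrightarrow> 1) at_top"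
    proof -
      have "(\<lambda>x. N c (\<sigma> c) * g (\<sigma> c) x) = f c" using fscale[OF c] by (simp add: fun_eq_iff)
      then show ?thesis using limf c by simp
    qed
    ultimately show ?thesis using tendsto_unique[OF trivial_limit_at_top_linorder] by force
  qed
  have feq: "f c = g (\<sigma> c)" if c: "c \<in> I" for c
    using fscale[OF c] lam1[OF c] by (simp add: fun_eq_iff)
  have inj: "inj_on \<sigma> I"
  proof (rule inj_onI)
    fix c1 c2 assume c1: "c1 \<in> I" and c2: "c2 \<in> I" and e: "\<sigma> c1 = \<sigma> c2"
    show "c1 = c2"
    proof (rule ccontr)
      assume ne: "c1 \<noteq> c2"
      have "f c1 = f c2" using feq c1 c2 e by simp
      have "(\<Sum>z\<in>I. (if z = c1 then 1 else 0) * f z x) = (\<Sum>z\<in>I. (if z = c2 then 1 else 0) * f z x)" for x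
      proof -
        have "(\<Sum>z\<in>I. (if z = c1 then 1 else 0) * f z x) = (\<Sum>z\<in>I. (if z = c1 then f z x else 0))"
          by (rule sum.cong) auto
        also have "\<dots> = f c1 x" using c1 fin by simp
        also have "\<dots> = f c2 x" using \<open>f c1 = f c2\<close> by simp
        also have "\<dots> = (\<Sum>z\<in>I. (if z = c2 then f z x else 0))" using c2 fin by simp
        also have "\<dots> = (\<Sum>z\<in>I. (if z = c2 then 1 else 0) * f z x)" by (rule sum.cong) auto
        finally show ?thesis .
      qed
      from indep_coeff[OF indf this c1] ne show False by simp
    qed
  qed
  have bij: "bij_betw \<sigma> I J"
  proof -
    have "\<sigma> ` I \<subseteq> J" using s1 by auto
    moreover have "card (\<sigma> ` I) = card J" using card_image[OF inj] card by simp
    ultimately have "\<sigma> ` I = J" using fin(2) by (metis card_subset_eq)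
    then show ?thesis using inj unfolding bij_betw_def by simp
  qed
  have Mone: "M (\<sigma> c) c = 1" if c: "c \<in> I" for c
  proof -
    have "(\<Sum>c'\<in>I. M (\<sigma> c) c' * f c' t) = (\<Sum>c'\<in>I. (if c = c' then 1 else 0) * f c' t)" for t
    proof -
      have "(\<Sum>c'\<in>I. M (\<sigma> c) c' * f c' t) = g (\<sigma> c) t" using M s1[OF c] by simp
      also have "\<dots> = f c t" using feq[OF c] by simp
      also have "\<dots> = (\<Sum>c'\<in>I. (if c' = c then f c' t else 0))" using c fin by simp
      also have "\<dots> = (\<Sum>c'\<in>I. (if c = c' then 1 else 0) * f c' t)" by (rule sum.cong) auto
      finally show ?thesis .
    qed
    from indep_coeff[OF indf this c] show ?thesis by simp
  qed
  have peq: "q (\<sigma> c) = p c" if c: "c \<in> I" for c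
    using C[OF c, of "\<sigma> c" "\<sigma> c"] s1[OF c] lam1[OF c] Mone[OF c] by simp
  show ?thesis using bij feq peq by blast
qed


definition mk3 :: "'a \<Rightarrow> 'a \<Rightarrow> 'a \<Rightarrow> nat \<Rightarrow> 'a" where
  "mk3 a b c = (\<lambda>v. if v = 1 then a else if v = 2 then b else if v = 3 then c else undefined)"

definition mk4 :: "'a \<Rightarrow> 'a \<Rightarrow> 'a \<Rightarrow> 'a \<Rightarrow> nat \<Rightarrow> 'a" where
  "mk4 a b c d = (\<lambda>v. if v = 1 then a else if v = 2 then b else if v = 3 then c else if v = 4 then d else undefined)"

lemma set3: "{1..3::nat} = {1,2,3}" by auto
lemma set4: "{1..4::nat} = {1,2,3,4}" by auto

lemma sum_PiE3:
  fixes h :: "(nat \<Rightarrow> 'a) \<Rightarrow> real"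
  shows "(\<Sum>z\<in>{1..3::nat} \<rightarrow>\<^sub>E A. h z) = (\<Sum>a\<in>A. \<Sum>b\<in>A. \<Sum>c\<in>A. h (mk3 a b c))"
proof -
  have "(\<Sum>a\<in>A. \<Sum>b\<in>A. \<Sum>c\<in>A. h (mk3 a b c)) = (\<Sum>a\<in>A. \<Sum>bc\<in>A \<times> A. h (mk3 a (fst bc) (snd bc)))"
    by (simp add: sum.cartesian_product')
  also have "\<dots> = (\<Sum>abc\<in>A \<times> (A \<times> A). h (mk3 (fst abc) (fst (snd abc)) (snd (snd abc))))"
    by (simp add: sum.cartesian_product')
  also have "\<dots> = (\<Sum>z\<in>{1..3::nat} \<rightarrow>\<^sub>E A. h z)"
  proof (rule sum.reindex_bij_witness[where i = "\<lambda>z. (z 1, z 2, z 3)" and j = "\<lambda>abc. mk3 (fst abc) (fst (snd abc)) (snd (snd abc))"])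
    fix abc assume "abc \<in> A \<times> (A \<times> A)"
    then show "mk3 (fst abc) (fst (snd abc)) (snd (snd abc)) \<in> {1..3} \<rightarrow>\<^sub>E A"
      unfolding set3 by (auto simp: mk3_def PiE_iff extensional_def)
  next
    fix z assume z: "z \<in> {1..3::nat} \<rightarrow>\<^sub>E A"
    show "mk3 (fst (z 1, z 2, z 3)) (fst (snd (z 1, z 2, z 3))) (snd (snd (z 1, z 2, z 3))) = z"
    proof
      fix v :: nat
      show "mk3 (fst (z 1, z 2, z 3)) (fst (snd (z 1, z 2, z 3))) (snd (snd (z 1, z 2, z 3))) v = z v"
        using z PiE_arb[OF z, of v] unfolding set3 by (auto simp: mk3_def)
    qed
    show "(z 1, z 2, z 3) \<in> A \<times> (A \<times> A)" using PiE_mem[OF z, of 1] PiE_mem[OF z, of 2] PiE_mem[OF z, of 3] by simp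
  qed (auto simp: mk3_def)
  finally show ?thesis by simp
qed

lemma sum_PiE4:
  fixes h :: "(nat \<Rightarrow> 'a) \<Rightarrow> real"
  shows "(\<Sum>z\<in>{1..4::nat} \<rightarrow>\<^sub>E A. h z) = (\<Sum>a\<in>A. \<Sum>b\<in>A. \<Sum>c\<in>A. \<Sum>d\<in>A. h (mk4 a b c d))"
proof -
  have "(\<Sum>a\<in>A. \<Sum>b\<in>A. \<Sum>c\<in>A. \<Sum>d\<in>A. h (mk4 a b c d)) = (\<Sum>a\<in>A. \<Sum>b\<in>A. \<Sum>cd\<in>A \<times> A. h (mk4 a b (fst cd) (snd cd)))"
    by (simp add: sum.cartesian_product')
  also have "\<dots> = (\<Sum>a\<in>A. \<Sum>bcd\<in>A \<times> (A \<times> A). h (mk4 a (fst bcd) (fst (snd bcd)) (snd (snd bcd))))"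
    by (simp add: sum.cartesian_product')
  also have "\<dots> = (\<Sum>t\<in>A \<times> (A \<times> (A \<times> A)). h (mk4 (fst t) (fst (snd t)) (fst (snd (snd t))) (snd (snd (snd t)))))"
    by (simp add: sum.cartesian_product')
  also have "\<dots> = (\<Sum>z\<in>{1..4::nat} \<rightarrow>\<^sub>E A. h z)"
  proof (rule sum.reindex_bij_witness[where i = "\<lambda>z. (z 1, z 2, z 3, z 4)" and j = "\<lambda>t. mk4 (fst t) (fst (snd t)) (fst (snd (snd t))) (snd (snd (snd t)))"])
    fix t assume "t \<in> A \<times> (A \<times> (A \<times> A))"
    then show "mk4 (fst t) (fst (snd t)) (fst (snd (snd t))) (snd (snd (snd t))) \<in> {1..4} \<rightarrow>\<^sub>E A"
      unfolding set4 by (auto simp: mk4_def PiE_iff extensional_def)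
  next
    fix z assume z: "z \<in> {1..4::nat} \<rightarrow>\<^sub>E A"
    show "mk4 (fst (z 1, z 2, z 3, z 4)) (fst (snd (z 1, z 2, z 3, z 4))) (fst (snd (snd (z 1, z 2, z 3, z 4)))) (snd (snd (snd (z 1, z 2, z 3, z 4)))) = z"
    proof
      fix v :: nat
      show "mk4 (fst (z 1, z 2, z 3, z 4)) (fst (snd (z 1, z 2, z 3, z 4))) (fst (snd (snd (z 1, z 2, z 3, z 4)))) (snd (snd (snd (z 1, z 2, z 3, z 4)))) v = z v"
        using z PiE_arb[OF z, of v] unfolding set4 by (auto simp: mk4_def)
    qed
    show "(z 1, z 2, z 3, z 4) \<in> A \<times> (A \<times> (A \<times> A))" using PiE_mem[OF z, of 1] PiE_mem[OF z, of 2] PiE_mem[OF z, of 3] PiE_mem[OF z, of 4] by simp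
  qed (auto simp: mk4_def)
  finally show ?thesis by simp
qed

lemma jc_two:
  "wsbm_joint_cdf r p F 3 two_star [x1, x2] =
    (\<Sum>a\<in>{1..r}. p a * wsbm_marg_cdf r p F a x1 * wsbm_marg_cdf r p F a x2)"
proof -
  have l2: "{..<2::nat} = {0, 1}" by auto
  have "wsbm_joint_cdf r p F 3 two_star [x1, x2] = (\<Sum>a\<in>{1..r}. \<Sum>b\<in>{1..r}. \<Sum>c\<in>{1..r}.
      p a * p b * p c * (wsbm_cdf F a b x1 * wsbm_cdf F a c x2))"
    unfolding wsbm_joint_cdf_def two_star_def sum_PiE3 unfolding set3 l2 by (simp add: mk3_def mult.assoc)
  also have "\<dots> = (\<Sum>a\<in>{1..r}. p a * wsbm_marg_cdf r p F a x1 * wsbm_marg_cdf r p F a x2)"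
    unfolding wsbm_marg_cdf_def by (simp add: sum_distrib_left sum_distrib_right mult_ac)
  finally show ?thesis .
qed

lemma jc_three:
  "wsbm_joint_cdf r p F 4 three_star [x1, x2, x3] =
    (\<Sum>a\<in>{1..r}. p a * wsbm_marg_cdf r p F a x1 * wsbm_marg_cdf r p F a x2 * wsbm_marg_cdf r p F a x3)"
proof -
  have l3: "{..<3::nat} = {0, 1, 2}" by auto
  have "wsbm_joint_cdf r p F 4 three_star [x1, x2, x3] = (\<Sum>a\<in>{1..r}. \<Sum>b\<in>{1..r}. \<Sum>c\<in>{1..r}. \<Sum>d\<in>{1..r}.
      p a * p b * p c * p d * (wsbm_cdf F a b x1 * wsbm_cdf F a c x2 * wsbm_cdf F a d x3))"
    unfolding wsbm_joint_cdf_def three_star_def sum_PiE4 unfolding set4 l3 by (simp add: mk4_def mult.assoc)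
  also have "\<dots> = (\<Sum>a\<in>{1..r}. p a * wsbm_marg_cdf r p F a x1 * wsbm_marg_cdf r p F a x2 * wsbm_marg_cdf r p F a x3)"
    unfolding wsbm_marg_cdf_def by (simp add: sum_distrib_left sum_distrib_right mult_ac)
  finally show ?thesis .
qed

lemma jc_path:
  "wsbm_joint_cdf r p F 4 path4 [x1, x2, x3] =
    (\<Sum>a\<in>{1..r}. \<Sum>c\<in>{1..r}. p a * p c * wsbm_marg_cdf r p F a x1 * wsbm_cdf F a c x2 * wsbm_marg_cdf r p F c x3)"
proof -
  have l3: "{..<3::nat} = {0, 1, 2}" by auto
  have "wsbm_joint_cdf r p F 4 path4 [x1, x2, x3] = (\<Sum>a\<in>{1..r}. \<Sum>b\<in>{1..r}. \<Sum>c\<in>{1..r}. \<Sum>d\<in>{1..r}.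
      p a * p b * p c * p d * (wsbm_cdf F a b x1 * wsbm_cdf F a c x2 * wsbm_cdf F c d x3))"
    unfolding wsbm_joint_cdf_def path4_def sum_PiE4 unfolding set4 l3 by (simp add: mk4_def mult.assoc)
  also have "\<dots> = (\<Sum>a\<in>{1..r}. \<Sum>c\<in>{1..r}. \<Sum>b\<in>{1..r}. \<Sum>d\<in>{1..r}.
      p a * p b * p c * p d * (wsbm_cdf F a b x1 * wsbm_cdf F a c x2 * wsbm_cdf F c d x3))"
    by (intro sum.cong refl sum.swap)
  also have "\<dots> = (\<Sum>a\<in>{1..r}. \<Sum>c\<in>{1..r}. p a * p c * wsbm_marg_cdf r p F a x1 * wsbm_cdf F a c x2 * wsbm_marg_cdf r p F c x3)"
    unfolding wsbm_marg_cdf_def by (simp add: sum_distrib_left sum_distrib_right mult_ac)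
  finally show ?thesis .
qed


lemma wsbm_facts:
  assumes "wsbm r p F"
  shows "lin_indep {1..r} (wsbm_marg_cdf r p F)"
    and "\<forall>z\<in>{1..r}. p z > 0"
    and "\<forall>z1\<in>{1..r}. \<forall>z2\<in>{1..r}. real_distribution (F z1 z2)"
    and "\<forall>c\<in>{1..r}. (wsbm_marg_cdf r p F c \<longlongrightarrow> 1) at_top"
proof -
  show "lin_indep {1..r} (wsbm_marg_cdf r p F)" using assms unfolding wsbm_def lin_indep_def by blast
  show "\<forall>z\<in>{1..r}. p z > 0" using assms unfolding wsbm_def by blast
  show rd: "\<forall>z1\<in>{1..r}. \<forall>z2\<in>{1..r}. real_distribution (F z1 z2)"
    using assms unfolding wsbm_def by (auto simp: real_distribution_def real_distribution_axioms_def)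
  show "\<forall>c\<in>{1..r}. (wsbm_marg_cdf r p F c \<longlongrightarrow> 1) at_top"
  proof
    fix c assume c: "c \<in> {1..r}"
    have "((\<lambda>x. \<Sum>z'\<in>{1..r}. wsbm_cdf F c z' x * p z') \<longlongrightarrow> (\<Sum>z'\<in>{1..r}. 1 * p z')) at_top"
    proof (rule tendsto_sum)
      fix z' assume z': "z' \<in> {1..r}"
      have "(cdf (F c z') \<longlongrightarrow> 1) at_top"
        using rd c z' real_distribution.cdf_lim_at_top_prob by blast
      then have "((\<lambda>x. wsbm_cdf F c z' x) \<longlongrightarrow> 1) at_top"
        by (simp add: wsbm_cdf_def cdf_def)
      then show "((\<lambda>x. wsbm_cdf F c z' x * p z') \<longlongrightarrow> 1 * p z') at_top"
        by (intro tendsto_mult tendsto_const)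
    qed
    moreover have "(\<Sum>z'\<in>{1..r}. 1 * p z') = 1" using assms unfolding wsbm_def by simp
    ultimately show "(wsbm_marg_cdf r p F c \<longlongrightarrow> 1) at_top"
      by (simp add: wsbm_marg_cdf_def[abs_def])
  qed
qed

theorem theorem1:
  fixes r r' :: nat and p p' :: "nat \<Rightarrow> real" and F F' :: "nat \<Rightarrow> nat \<Rightarrow> real measure"
  assumes "wsbm r p F" and "wsbm r' p' F'"
  shows "((\<forall>x1 x2. wsbm_joint_cdf r p F 3 two_star [x1, x2]
                 = wsbm_joint_cdf r' p' F' 3 two_star [x1, x2]) \<longrightarrow> r = r')
     \<and> (\<forall>\<phi> :: real \<Rightarrow> real.
          \<phi> \<in> borel_measurable borel \<and>
          (\<forall>z1\<in>{1..r}. \<forall>z2\<in>{1..r}. integrable (F z1 z2) \<phi>) \<and>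
          (\<forall>z1\<in>{1..r'}. \<forall>z2\<in>{1..r'}. integrable (F' z1 z2) \<phi>) \<and>
          (\<forall>x1 x2 x3. wsbm_joint_cdf r p F 4 three_star [x1, x2, x3]
                     = wsbm_joint_cdf r' p' F' 4 three_star [x1, x2, x3]) \<and>
          (\<forall>x1 x2 x3. wsbm_joint_cdf r p F 4 path4 [x1, x2, x3]
                     = wsbm_joint_cdf r' p' F' 4 path4 [x1, x2, x3])
          \<longrightarrow> (\<exists>\<sigma>. bij_betw \<sigma> {1..r} {1..r'} \<and>
                  (\<forall>z\<in>{1..r}. p' (\<sigma> z) = p z) \<and>
                  (\<forall>z1\<in>{1..r}. \<forall>z2\<in>{1..r}.
                     (\<integral>x. \<phi> x \<partial>(F' (\<sigma> z1) (\<sigma> z2))) = (\<integral>x. \<phi> x \<partial>(F z1 z2)))))"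
proof -
  define f where "f = wsbm_marg_cdf r p F"
  define g where "g = wsbm_marg_cdf r' p' F'"
  define I where "I = {1..r}"
  define J where "J = {1..r'}"
  have fin: "finite I" "finite J" unfolding I_def J_def by auto
  have indf: "lin_indep I f" and posp: "\<forall>z\<in>I. p z > 0"
    and rdf: "\<forall>z1\<in>I. \<forall>z2\<in>I. real_distribution (F z1 z2)" and limf: "\<forall>c\<in>I. (f c \<longlongrightarrow> 1) at_top"
    using wsbm_facts[OF assms(1)] unfolding f_def I_def by auto
  have indg: "lin_indep J g" and posq: "\<forall>z\<in>J. p' z > 0"
    and rdg: "\<forall>z1\<in>J. \<forall>z2\<in>J. real_distribution (F' z1 z2)" and limg: "\<forall>c\<in>J. (g c \<longlongrightarrow> 1) at_top"
    using wsbm_facts[OF assms(2)] unfolding g_def J_def by auto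
  have part1: "r = r'" if H: "\<forall>x1 x2. wsbm_joint_cdf r p F 3 two_star [x1, x2]
                 = wsbm_joint_cdf r' p' F' 3 two_star [x1, x2]"
  proof -
    have eq: "(\<Sum>z\<in>I. p z * f z x * f z y) = (\<Sum>w\<in>J. p' w * g w x * g w y)" for x y
      using H[rule_format, of x y] unfolding jc_two f_def g_def I_def J_def .
    obtain N where N: "\<forall>c\<in>I. \<forall>y. f c y = (\<Sum>w\<in>J. N c w * g w y)"
      using span2[OF fin indf posp eq] by blast
    obtain M where M: "\<forall>w\<in>J. \<forall>y. g w y = (\<Sum>c\<in>I. M w c * f c y)"
      using span2[OF fin(2,1) indg posq eq[symmetric]] by blast
    have "card I = card J" using trace_card[OF fin indf indg N M] .
    then show ?thesis unfolding I_def J_def by simp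
  qed
  have part2: "\<exists>\<sigma>. bij_betw \<sigma> {1..r} {1..r'} \<and>
                  (\<forall>z\<in>{1..r}. p' (\<sigma> z) = p z) \<and>
                  (\<forall>z1\<in>{1..r}. \<forall>z2\<in>{1..r}.
                     (\<integral>x. \<phi> x \<partial>(F' (\<sigma> z1) (\<sigma> z2))) = (\<integral>x. \<phi> x \<partial>(F z1 z2)))"
    if H3: "\<forall>x1 x2 x3. wsbm_joint_cdf r p F 4 three_star [x1, x2, x3]
                     = wsbm_joint_cdf r' p' F' 4 three_star [x1, x2, x3]"
    and HP: "\<forall>x1 x2 x3. wsbm_joint_cdf r p F 4 path4 [x1, x2, x3]
                     = wsbm_joint_cdf r' p' F' 4 path4 [x1, x2, x3]" for \<phi> :: "real \<Rightarrow> real"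
  proof -
    have eq: "(\<Sum>z\<in>I. p z * f z x * f z y * f z t) = (\<Sum>w\<in>J. p' w * g w x * g w y * g w t)" for x y t
      using H3[rule_format, of x y t] unfolding jc_three f_def g_def I_def J_def .
    obtain N where N: "\<forall>c\<in>I. \<forall>y. f c y = (\<Sum>w\<in>J. N c w * g w y)"
      using span3[OF fin indf posp eq] by blast
    obtain M where M: "\<forall>w\<in>J. \<forall>y. g w y = (\<Sum>c\<in>I. M w c * f c y)"
      using span3[OF fin(2,1) indg posq eq[symmetric]] by blast
    have card: "card I = card J" using trace_card[OF fin indf indg N M] .
    obtain \<sigma> where bij: "bij_betw \<sigma> I J" and fg: "\<forall>c\<in>I. f c = g (\<sigma> c)" and pq: "\<forall>c\<in>I. p' (\<sigma> c) = p c"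
      using components[OF fin indf indg posp posq eq N M card limf limg] by blast
    have sJ: "\<sigma> c \<in> J" if "c \<in> I" for c using bij that by (auto simp: bij_betw_def)
    have path: "(\<Sum>a\<in>I. \<Sum>c\<in>I. p a * p c * f a x1 * wsbm_cdf F a c x2 * f c x3)
        = (\<Sum>a\<in>I. \<Sum>c\<in>I. p a * p c * f a x1 * wsbm_cdf F' (\<sigma> a) (\<sigma> c) x2 * f c x3)" for x1 x2 x3
    proof -
      have "(\<Sum>a\<in>I. \<Sum>c\<in>I. p a * p c * f a x1 * wsbm_cdf F a c x2 * f c x3)
          = (\<Sum>u\<in>J. \<Sum>v\<in>J. p' u * p' v * g u x1 * wsbm_cdf F' u v x2 * g v x3)"
        using HP[rule_format, of x1 x2 x3] unfolding jc_path f_def g_def I_def J_def .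
      also have "\<dots> = (\<Sum>a\<in>I. \<Sum>v\<in>J. p' (\<sigma> a) * p' v * g (\<sigma> a) x1 * wsbm_cdf F' (\<sigma> a) v x2 * g v x3)"
        by (rule sum.reindex_bij_betw[OF bij, symmetric])
      also have "\<dots> = (\<Sum>a\<in>I. \<Sum>c\<in>I. p' (\<sigma> a) * p' (\<sigma> c) * g (\<sigma> a) x1 * wsbm_cdf F' (\<sigma> a) (\<sigma> c) x2 * g (\<sigma> c) x3)"
        by (intro sum.cong refl sum.reindex_bij_betw[OF bij, symmetric])
      also have "\<dots> = (\<Sum>a\<in>I. \<Sum>c\<in>I. p a * p c * f a x1 * wsbm_cdf F' (\<sigma> a) (\<sigma> c) x2 * f c x3)"
        using fg pq by (intro sum.cong refl) auto
      finally show ?thesis .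
    qed
    have cdfeq: "wsbm_cdf F a c x = wsbm_cdf F' (\<sigma> a) (\<sigma> c) x" if a: "a \<in> I" and c: "c \<in> I" for a c x
    proof -
      have 1: "(\<Sum>a\<in>I. p a * p c * f a x1 * wsbm_cdf F a c x) = (\<Sum>a\<in>I. p a * p c * f a x1 * wsbm_cdf F' (\<sigma> a) (\<sigma> c) x)"
        if c: "c \<in> I" for c x1
      proof -
        have "(\<Sum>c\<in>I. (\<Sum>a\<in>I. p a * p c * f a x1 * wsbm_cdf F a c x) * f c x3)
            = (\<Sum>c\<in>I. (\<Sum>a\<in>I. p a * p c * f a x1 * wsbm_cdf F' (\<sigma> a) (\<sigma> c) x) * f c x3)" for x3
        proof -
          have "(\<Sum>c\<in>I. (\<Sum>a\<in>I. p a * p c * f a x1 * wsbm_cdf F a c x) * f c x3)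
              = (\<Sum>a\<in>I. \<Sum>c\<in>I. p a * p c * f a x1 * wsbm_cdf F a c x * f c x3)"
            by (subst sum.swap) (simp add: sum_distrib_right)
          also have "\<dots> = (\<Sum>a\<in>I. \<Sum>c\<in>I. p a * p c * f a x1 * wsbm_cdf F' (\<sigma> a) (\<sigma> c) x * f c x3)"
            by (rule path)
          also have "\<dots> = (\<Sum>c\<in>I. (\<Sum>a\<in>I. p a * p c * f a x1 * wsbm_cdf F' (\<sigma> a) (\<sigma> c) x) * f c x3)"
            by (subst sum.swap) (simp add: sum_distrib_right)
          finally show ?thesis .
        qed
        from indep_coeff[OF indf this c] show ?thesis .
      qed
      have "(\<Sum>a\<in>I. (p a * p c * wsbm_cdf F a c x) * f a x1) = (\<Sum>a\<in>I. (p a * p c * wsbm_cdf F' (\<sigma> a) (\<sigma> c) x) * f a x1)" for x1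
        using 1[OF c, of x1] by (simp add: mult_ac)
      from indep_coeff[OF indf this a] have "p a * p c * wsbm_cdf F a c x = p a * p c * wsbm_cdf F' (\<sigma> a) (\<sigma> c) x" .
      moreover have "p a * p c \<noteq> 0" using posp a c by auto
      ultimately show ?thesis by simp
    qed
    have Feq: "F' (\<sigma> a) (\<sigma> c) = F a c" if a: "a \<in> I" and c: "c \<in> I" for a c
    proof (rule cdf_unique)
      show "real_distribution (F' (\<sigma> a) (\<sigma> c))" using rdg sJ a c by blast
      show "real_distribution (F a c)" using rdf a c by blast
      show "cdf (F' (\<sigma> a) (\<sigma> c)) = cdf (F a c)"
        using cdfeq[OF a c] by (simp add: fun_eq_iff cdf_def wsbm_cdf_def)
    qed
    show ?thesis
      using bij pq Feq unfolding I_def J_def by auto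
  qed
  show ?thesis using part1 part2 by blast
qed

end
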